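(* Let $R$ be a locally compact topological ring and $M$ a locally compact left topological $R$-module such that its Pontryagin dual $\widehat{M}$ (a topological right $R$-module via $\chi^r(m)=\chi(rm)$) has the no small submodules property. Then $M$ is compactly generated, i.e. there is a compact subset $K\subset M$ with $M=RK$.
   Context: All topological groups are Hausdorff; rings are unital. $\widehat{M}$ is the group of continuous homomorphisms $M\to\mathbb{S}^1$ with the compact-open topology. A topological module has the no small submodules property if there exists a neighbourhood of $0$ whose only submodule contained in it is the trivial one. $RK$ denotes the submodule generated by $K$. *)

theory Defs
  imports "HOL-Analysis.Analysis"
begin

definition topological_ring :: "('r::{ring_1,topological_space}) itself \<Rightarrow> bool" where
  "topological_ring _ \<longleftrightarrow>
     continuous_on UNIV (\<lambda>p::'r\<times>'r. fst p + snd p) \<and>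
     continuous_on UNIV (\<lambda>p::'r\<times>'r. fst p * snd p) \<and>
     continuous_on UNIV (\<lambda>x::'r. - x)"

definition left_module :: "('r::ring_1 \<Rightarrow> 'm::ab_group_add \<Rightarrow> 'm) \<Rightarrow> bool" where
  "left_module act \<longleftrightarrow>
     (\<forall>r x y. act r (x + y) = act r x + act r y) \<and>
     (\<forall>r s x. act (r + s) x = act r x + act s x) \<and>
     (\<forall>r s x. act (r * s) x = act r (act s x)) \<and>
     (\<forall>x. act 1 x = x)"

definition topological_left_module ::
  "('r::{ring_1,topological_space} \<Rightarrow> 'm::{ab_group_add,topological_space} \<Rightarrow> 'm) \<Rightarrow> bool" where
  "topological_left_module act \<longleftrightarrow>
     left_module act \<and>
     continuous_on UNIV (\<lambda>p::'r\<times>'m. act (fst p) (snd p)) \<and>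
     continuous_on UNIV (\<lambda>p::'m\<times>'m. fst p + snd p) \<and>
     continuous_on UNIV (\<lambda>x::'m. - x)"

definition is_submodule :: "('r::ring_1 \<Rightarrow> 'm::ab_group_add \<Rightarrow> 'm) \<Rightarrow> 'm set \<Rightarrow> bool" where
  "is_submodule act N \<longleftrightarrow> 0 \<in> N \<and> (\<forall>x\<in>N. \<forall>y\<in>N. x + y \<in> N) \<and>
     (\<forall>x\<in>N. - x \<in> N) \<and> (\<forall>r. \<forall>x\<in>N. act r x \<in> N)"

definition gen_submodule :: "('r::ring_1 \<Rightarrow> 'm::ab_group_add \<Rightarrow> 'm) \<Rightarrow> 'm set \<Rightarrow> 'm set" where
  "gen_submodule act K = \<Inter>{N. is_submodule act N \<and> K \<subseteq> N}"

text \<open>Pontryagin dual: continuous homomorphisms M \<rightarrow> S^1 (unit circle in \<complex>, multiplicative).\<close>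
definition characters :: "'m::{ab_group_add,topological_space} itself \<Rightarrow> ('m \<Rightarrow> complex) set" where
  "characters _ = {c. continuous_on UNIV c \<and> (\<forall>x. norm (c x) = 1) \<and>
                        (\<forall>x y::'m. c (x + y) = c x * c y)}"

text \<open>Compact-open topology on the dual, generated by the subbasis
  {c \<in> dual. c ` K \<subseteq> V}, K compact in M, V open (in \<complex>; equivalently V \<inter> S^1 open in S^1).\<close>
definition dual_topology :: "'m::{ab_group_add,topological_space} itself \<Rightarrow> ('m \<Rightarrow> complex) topology" where
  "dual_topology T = topology_generated_by
     {{c \<in> characters T. c ` K \<subseteq> V} | K V. compact K \<and> open V}"

text \<open>Right R-module structure on the dual: c^r(m) = c(r m). The group operation is pointwise product,
 zero is the trivial character.\<close>
definition dual_submodule ::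
  "('r::ring_1 \<Rightarrow> 'm::{ab_group_add,topological_space} \<Rightarrow> 'm) \<Rightarrow> ('m \<Rightarrow> complex) set \<Rightarrow> bool" where
  "dual_submodule act N \<longleftrightarrow> N \<subseteq> characters TYPE('m) \<and> (\<lambda>_. 1) \<in> N \<and>
     (\<forall>c\<in>N. \<forall>d\<in>N. (\<lambda>m. c m * d m) \<in> N) \<and>
     (\<forall>c\<in>N. (\<lambda>m. inverse (c m)) \<in> N) \<and>
     (\<forall>r. \<forall>c\<in>N. (\<lambda>m. c (act r m)) \<in> N)"

definition dual_NSS :: "('r::ring_1 \<Rightarrow> 'm::{ab_group_add,topological_space} \<Rightarrow> 'm) \<Rightarrow> bool" where
  "dual_NSS act \<longleftrightarrow> (\<exists>U. U \<subseteq> characters TYPE('m) \<and>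
     (\<exists>W. openin (dual_topology TYPE('m)) W \<and> (\<lambda>_. 1) \<in> W \<and> W \<subseteq> U) \<and>
     (\<forall>N. dual_submodule act N \<and> N \<subseteq> U \<longrightarrow> N = {\<lambda>_. 1}))"

end

theory Submission imports Defs "HOL-Algebra.Group" begin

definition AG :: "'a::ab_group_add monoid" where
  "AG = \<lparr>carrier = UNIV, monoid.mult = (+), one = 0\<rparr>"

lemma AG_group: "comm_group (AG :: 'a::ab_group_add monoid)"
  apply (rule comm_groupI) apply (auto simp: AG_def add.assoc add.commute)
  by (rule_tac x="-x" in exI) simp

interpretation AGg: comm_group "AG :: 'a::ab_group_add monoid" by (rule AG_group)

lemma AG_inv: "inv\<^bsub>AG\<^esub> (x::'a::ab_group_add) = - x"
  by (rule AGg.inv_equality) (auto simp: AG_def)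

definition zm :: "int \<Rightarrow> 'a::ab_group_add \<Rightarrow> 'a" where
  "zm n x = x [^]\<^bsub>AG\<^esub> n"

lemma zm_add: "zm (a + b) x = zm a x + zm b x"
  unfolding zm_def using AGg.int_pow_mult[of x a b] by (simp add: AG_def)
lemma zm_mult: "zm (a * b) x = zm b (zm a x)"
  unfolding zm_def using AGg.int_pow_pow[of x a b] by (simp add: AG_def)
lemma zm_0[simp]: "zm 0 x = 0"
  unfolding zm_def by (simp add: AG_def)
lemma zm_1[simp]: "zm 1 x = x"
  unfolding zm_def using AGg.int_pow_1[of x] by (simp add: AG_def)
lemma zm_neg: "zm (- a) x = - zm a x"
  using zm_add[of a "-a" x] by (simp add: eq_neg_iff_add_eq_0 add.commute)
lemma zm_diff: "zm (a - b) x = zm a x - zm b x"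
  using zm_add[of a "-b" x] by (simp add: zm_neg)

definition sg :: "'a::ab_group_add set \<Rightarrow> bool" where
  "sg S \<longleftrightarrow> 0 \<in> S \<and> (\<forall>a\<in>S. \<forall>b\<in>S. a + b \<in> S) \<and> (\<forall>a\<in>S. - a \<in> S)"

lemma zm_in:
  assumes "sg S" "x \<in> S" shows "zm n x \<in> S"
proof (induction n rule: int_induct[where k=0])
  case base then show ?case using assms by (simp add: sg_def)
next
  case (step1 i) then show ?case using assms zm_add[of i 1 x] by (simp add: sg_def)
next
  case (step2 i) then show ?case using assms zm_diff[of i 1 x] unfolding sg_def by (metis zm_1 diff_conv_add_uminus)
qed

lemma hom_0:
  assumes "sg S" "\<forall>a\<in>S. \<forall>b\<in>S. f (a + b) = f a * (f b :: complex)" "\<forall>x\<in>S. norm (f x) = 1"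
  shows "f 0 = 1"
proof -
  have "f 0 = f 0 * f 0" using assms by (metis add_0 sg_def)
  moreover have "f 0 \<noteq> 0" using assms by (metis norm_zero sg_def zero_neq_one)
  ultimately show ?thesis by (metis mult_cancel_left2)
qed

lemma hom_neg:
  assumes "sg S" "\<forall>a\<in>S. \<forall>b\<in>S. f (a + b) = f a * (f b :: complex)" "\<forall>x\<in>S. norm (f x) = 1"
    "x \<in> S"
  shows "f (- x) = inverse (f x)"
proof -
  have "f x * f (- x) = 1" using assms hom_0[OF assms(1-3)] by (metis add.right_inverse sg_def)
  then show ?thesis by (metis inverse_unique)
qed

lemma hom_zm:
  assumes "sg S" "\<forall>a\<in>S. \<forall>b\<in>S. f (a + b) = f a * (f b :: complex)" "\<forall>x\<in>S. norm (f x) = 1"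
    "x \<in> S"
  shows "f (zm n x) = f x powi n"
proof (induction n rule: int_induct[where k=0])
  case base then show ?case using hom_0[OF assms(1-3)] by simp
next
  case (step1 i)
  have nz: "f x \<noteq> 0" using assms by fastforce
  have "f (zm (i+1) x) = f (zm i x) * f x" using assms zm_add[of i 1 x] zm_in[OF assms(1,4)] by simp
  then show ?case using step1 nz by (simp add: power_int_add)
next
  case (step2 i)
  have nz: "f x \<noteq> 0" using assms by fastforce
  have "f (zm (i-1) x) = f (zm i x) * f (- x)" using assms zm_diff[of i 1 x] zm_in[OF assms(1,4)]
    by (metis diff_conv_add_uminus sg_def zm_1)
  then show ?case using step2 nz hom_neg[OF assms] by (simp add: power_int_diff field_simps)
qed

lemma zm_gen:
  assumes "sg S" "zm n g \<in> S" "n \<noteq> 0"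
  shows "\<exists>k::nat. k > 0 \<and> zm (int k) g \<in> S \<and> (\<forall>m. zm m g \<in> S \<longrightarrow> int k dvd m)"
proof -
  have "\<exists>k::nat. k > 0 \<and> zm (int k) g \<in> S"
  proof (cases "n > 0")
    case True then show ?thesis using assms by (rule_tac x="nat n" in exI) auto
  next
    case False then show ?thesis using assms zm_neg[of n g]
      by (rule_tac x="nat (-n)" in exI) (auto simp: sg_def)
  qed
  define k where "k = (LEAST k::nat. k > 0 \<and> zm (int k) g \<in> S)"
  have k: "k > 0 \<and> zm (int k) g \<in> S" unfolding k_def by (rule LeastI_ex) fact
  have kmin: "\<And>j::nat. j > 0 \<and> zm (int j) g \<in> S \<Longrightarrow> k \<le> j" unfolding k_def by (rule Least_le)
  have "int k dvd m" if "zm m g \<in> S" for m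
  proof (rule ccontr)
    assume nd: "\<not> int k dvd m"
    have eq: "m mod int k = m + (- (int k * (m div int k)))" by (simp add: minus_div_mult_eq_mod[symmetric] algebra_simps)
    have "zm (m mod int k) g = zm m g + - zm (m div int k) (zm (int k) g)"
      by (subst eq, simp only: zm_add zm_neg zm_mult)
    also have "\<dots> \<in> S" using that k zm_in[OF assms(1)] assms(1) unfolding sg_def by blast
    finally have inS: "zm (int (nat (m mod int k))) g \<in> S" using k by simp
    have "m mod int k \<noteq> 0" using nd by (simp add: dvd_eq_mod_eq_0)
    moreover have nn: "m mod int k \<ge> 0" using k by simp
    ultimately have "nat (m mod int k) > 0" by linarith
    then have "k \<le> nat (m mod int k)" using kmin inS by blast
    moreover have "m mod int k < int k" using k by simp
    ultimately show False using le_nat_iff[OF nn, of k] by linarith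
  qed
  then show ?thesis using k by blast
qed

lemma ext_step:
  fixes f :: "'a::ab_group_add \<Rightarrow> complex"
  assumes sgS: "sg S" and hom: "\<forall>a\<in>S. \<forall>b\<in>S. f (a + b) = f a * f b"
    and nrm: "\<forall>x\<in>S. norm (f x) = 1" and gS: "g \<notin> S" and z1: "norm z = 1"
    and P: "\<forall>n. zm n g \<in> S \<longrightarrow> f (zm n g) = z powi n"
  defines "S' \<equiv> {x. \<exists>s\<in>S. \<exists>n. x = s + zm n g}"
  shows "\<exists>f'. (\<forall>x. f' x \<noteq> 0 \<longleftrightarrow> x \<in> S') \<and> sg S' \<and> S \<subseteq> S' \<and> g \<in> S' \<and>
     (\<forall>a\<in>S'. \<forall>b\<in>S'. f' (a + b) = f' a * f' b) \<and> (\<forall>x\<in>S'. norm (f' x) = 1) \<and>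
     (\<forall>s\<in>S. f' s = f s) \<and> f' g = z"
proof -
  have z0: "z \<noteq> 0" using z1 by auto
  have wd: "f s * z powi n = f s' * z powi n'"
    if "s \<in> S" "s' \<in> S" "s + zm n g = s' + zm n' g" for s s' n n'
  proof -
    have "zm (n - n') g = s' - s" using that(3) by (simp add: zm_diff algebra_simps)
    moreover have "s' - s \<in> S" using that sgS unfolding sg_def by (metis diff_conv_add_uminus)
    ultimately have e1: "f (s' - s) = z powi (n - n')" using P by metis
    have "f s' = f (s + (s' - s))" by simp
    also have "\<dots> = f s * z powi (n - n')" using hom that \<open>s' - s \<in> S\<close> e1 by metis
    finally have "f s' * z powi n' = f s * (z powi (n - n') * z powi n')" by simp
    also have "z powi (n - n') * z powi n' = z powi n" using z0 by (simp add: power_int_add[symmetric])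
    finally show ?thesis by simp
  qed
  define pr where "pr x = (SOME p. fst p \<in> S \<and> x = fst p + zm (snd p) g)" for x
  define f' where "f' x = (if x \<in> S' then f (fst (pr x)) * z powi (snd (pr x)) else 0)" for x
  have val: "f' (s + zm n g) = f s * z powi n" if "s \<in> S" for s n
  proof -
    have mem: "s + zm n g \<in> S'" using that unfolding S'_def by blast
    have "fst (pr (s + zm n g)) \<in> S \<and> s + zm n g = fst (pr (s + zm n g)) + zm (snd (pr (s + zm n g))) g"
      unfolding pr_def by (rule someI[where x="(s,n)"]) (use that in simp)
    then show ?thesis using wd[of s "fst (pr (s + zm n g))" n "snd (pr (s + zm n g))"] that mem
      unfolding f'_def by simp
  qed
  have nz: "norm (f' x) = 1" if xS: "x \<in> S'" for x
  proof -
    obtain s n where "s \<in> S" "x = s + zm n g" using xS unfolding S'_def by blast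
    then show ?thesis using val nrm z1 by (simp add: norm_mult norm_power_int)
  qed
  have c1: "\<forall>x. f' x \<noteq> 0 \<longleftrightarrow> x \<in> S'"
  proof (intro allI iffI)
    fix x assume "f' x \<noteq> 0" then show "x \<in> S'" unfolding f'_def by (auto split: if_splits)
  next
    fix x assume "x \<in> S'" then show "f' x \<noteq> 0" using nz[of x] by auto
  qed
  have sg': "sg S'" unfolding sg_def
  proof (intro conjI ballI)
    have "(0::'a) = 0 + zm 0 g" by simp
    then show "0 \<in> S'" using sgS unfolding S'_def sg_def by blast
  next
    fix a b assume "a \<in> S'" "b \<in> S'"
    then obtain s n s' n' where "s \<in> S" "a = s + zm n g" "s' \<in> S" "b = s' + zm n' g" unfolding S'_def by blast
    then have "a + b = (s + s') + zm (n + n') g" "s + s' \<in> S" using sgS by (auto simp: zm_add sg_def algebra_simps)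
    then show "a + b \<in> S'" unfolding S'_def by blast
  next
    fix a assume "a \<in> S'"
    then obtain s n where "s \<in> S" "a = s + zm n g" unfolding S'_def by blast
    then have "- a = (- s) + zm (- n) g" "- s \<in> S" using sgS by (auto simp: zm_neg sg_def)
    then show "- a \<in> S'" unfolding S'_def by blast
  qed
  have sub: "S \<subseteq> S'"
  proof
    fix s assume "s \<in> S" moreover have "s = s + zm 0 g" by simp
    ultimately show "s \<in> S'" unfolding S'_def by blast
  qed
  have "g = 0 + zm 1 g" by simp
  then have gin: "g \<in> S'" unfolding S'_def using sgS unfolding sg_def by blast
  have ho: "\<forall>a\<in>S'. \<forall>b\<in>S'. f' (a + b) = f' a * f' b"
  proof (intro ballI)
    fix a b assume "a \<in> S'" "b \<in> S'"
    then obtain s n s' n' where h: "s \<in> S" "a = s + zm n g" "s' \<in> S" "b = s' + zm n' g" unfolding S'_def by blast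
    then have "a + b = (s + s') + zm (n + n') g" "s + s' \<in> S" using sgS by (auto simp: zm_add sg_def algebra_simps)
    then have "f' (a + b) = f (s + s') * z powi (n + n')" using val by simp
    also have "\<dots> = (f s * z powi n) * (f s' * z powi n')" using hom h z0 by (simp add: power_int_add)
    finally show "f' (a + b) = f' a * f' b" using val h by simp
  qed
  have ex: "\<forall>s\<in>S. f' s = f s" using val[of _ 0] by simp
  have fg: "f' g = z" using val[of 0 1] sgS hom_0[OF sgS hom nrm] unfolding sg_def by simp
  show ?thesis using c1 sg' sub gin ho nz ex fg by blast
qed

lemma z_exists:
  fixes f :: "'a::ab_group_add \<Rightarrow> complex"
  assumes sgS: "sg S" and hom: "\<forall>a\<in>S. \<forall>b\<in>S. f (a + b) = f a * f b"
    and nrm: "\<forall>x\<in>S. norm (f x) = 1"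
  shows "\<exists>z. norm z = 1 \<and> (\<forall>n. zm n g \<in> S \<longrightarrow> f (zm n g) = z powi n)"
proof (cases "\<forall>n. zm n g \<in> S \<longrightarrow> n = 0")
  case True then show ?thesis using hom_0[OF assms] by (rule_tac x=1 in exI) auto
next
  case False
  then obtain n where "zm n g \<in> S" "n \<noteq> 0" by blast
  then obtain k :: nat where k: "k > 0" "zm (int k) g \<in> S" and dv: "\<forall>m. zm m g \<in> S \<longrightarrow> int k dvd m"
    using zm_gen[OF sgS] by blast
  define w where "w = f (zm (int k) g)"
  have w1: "norm w = 1" using nrm k unfolding w_def by blast
  define z where "z = cis (Arg w / real k)"
  have w0: "w \<noteq> 0" using w1 by auto
  have zk: "z ^ k = w" unfolding z_def Complex.DeMoivre using k w1 w0
    by (simp add: cis_Arg Complex.sgn_eq)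
  have "f (zm m g) = z powi m" if mS: "zm m g \<in> S" for m
  proof -
    obtain q where q: "m = int k * q" using dv mS by (auto elim: dvdE)
    have "f (zm m g) = f (zm q (zm (int k) g))" using q zm_mult[of "int k" q g] by simp
    also have "\<dots> = w powi q" unfolding w_def by (rule hom_zm[OF assms k(2)])
    also have "\<dots> = z powi m" using q power_int_power[of z k q] by (simp add: zk[symmetric])
    finally show ?thesis .
  qed
  moreover have "norm z = 1" unfolding z_def by simp
  ultimately show ?thesis by blast
qed

lemma z_init:
  fixes H :: "'a::ab_group_add set"
  assumes sgH: "sg H" and yH: "y \<notin> H"
  shows "\<exists>z::complex. norm z = 1 \<and> z \<noteq> 1 \<and> (\<forall>n. zm n y \<in> H \<longrightarrow> z powi n = 1)"
proof (cases "\<forall>n. zm n y \<in> H \<longrightarrow> n = 0")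
  case True then show ?thesis by (rule_tac x="-1" in exI) auto
next
  case False
  then obtain n where "zm n y \<in> H" "n \<noteq> 0" by blast
  then obtain k :: nat where k: "k > 0" "zm (int k) y \<in> H" and dv: "\<forall>m. zm m y \<in> H \<longrightarrow> int k dvd m"
    using zm_gen[OF sgH] by blast
  have k1: "k \<noteq> 1" using k yH by auto
  define z where "z = cis (2 * pi / real k)"
  have zk: "z ^ k = 1" unfolding z_def Complex.DeMoivre using k by simp
  have "z powi m = 1" if mH: "zm m y \<in> H" for m
  proof -
    obtain q where q: "m = int k * q" using dv mH by (auto elim: dvdE)
    show ?thesis using q zk by (simp add: power_int_power[symmetric])
  qed
  moreover have "norm z = 1" unfolding z_def by simp
  moreover have "z \<noteq> 1"
  proof
    assume "z = 1"
    then have "cos (2 * pi / real k) = 1" unfolding z_def by (metis cis.sel(1) one_complex.sel(1))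
    then obtain j :: int where j: "2 * pi / real k = of_int j * 2 * pi" using cos_one_2pi_int[of "2 * pi / real k"] by blast
    then have "(2 * pi) * (1 / real k) = (2 * pi) * of_int j" by simp
    then have "1 / real k = j" using pi_gt_zero by (metis mult_left_cancel pi_neq_zero mult_eq_0_iff zero_neq_numeral)
    moreover have "0 < 1 / real k" "1 / real k < 1" using k k1 by auto
    ultimately show False by (metis of_int_0_less_iff of_int_less_1_iff not_le zero_less_iff_neq_zero int_one_le_iff_zero_less of_int_le_1_iff linorder_not_less) 
  qed
  ultimately show ?thesis by blast
qed

lemma char_sep:
  fixes H :: "'a::ab_group_add set"
  assumes sgH: "sg H" and yH: "y \<notin> H"
  shows "\<exists>\<phi>::'a \<Rightarrow> complex. (\<forall>a b. \<phi> (a + b) = \<phi> a * \<phi> b) \<and> (\<forall>x. norm (\<phi> x) = 1) \<and>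
     (\<forall>h\<in>H. \<phi> h = 1) \<and> \<phi> y \<noteq> 1"
proof -
  define good where "good f \<longleftrightarrow> sg {x. f x \<noteq> 0} \<and> H \<subseteq> {x. f x \<noteq> 0} \<and> y \<in> {x. f x \<noteq> 0} \<and>
     (\<forall>a b. f a \<noteq> 0 \<longrightarrow> f b \<noteq> 0 \<longrightarrow> f (a + b) = f a * f b) \<and>
     (\<forall>x. f x \<noteq> 0 \<longrightarrow> norm (f x) = 1) \<and> (\<forall>h\<in>H. f h = 1) \<and> f y \<noteq> (1::complex)" for f :: "'a \<Rightarrow> complex"
  define r where "r = {(f, g). good f \<and> good g \<and> (\<forall>x. f x \<noteq> 0 \<longrightarrow> g x = f x)}"
  have Fr: "Field r = Collect good"
    unfolding Field_def r_def by auto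
  have po: "Partial_order r"
    unfolding partial_order_on_def preorder_on_def refl_on_def trans_on_def antisym_on_def Fr
  proof (intro conjI)
    show "r \<subseteq> Collect good \<times> Collect good" unfolding r_def by auto
    show "\<forall>x\<in>Collect good. (x, x) \<in> r" unfolding r_def by auto
    show "\<forall>x\<in>UNIV. \<forall>y\<in>UNIV. \<forall>z\<in>UNIV. (x, y) \<in> r \<longrightarrow> (y, z) \<in> r \<longrightarrow> (x, z) \<in> r"
      unfolding r_def by auto
    show "\<forall>x\<in>UNIV. \<forall>y\<in>UNIV. (x, y) \<in> r \<longrightarrow> (y, x) \<in> r \<longrightarrow> x = y"
      unfolding r_def by clarify (rule HOL.ext, metis)
  qed
  obtain z0 :: complex where z0: "norm z0 = 1" "z0 \<noteq> 1" "\<forall>n. zm n y \<in> H \<longrightarrow> z0 powi n = 1"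
    using z_init[OF sgH yH] by blast
  obtain f0 where f0: "(\<forall>x. f0 x \<noteq> 0 \<longleftrightarrow> x \<in> {x. \<exists>s\<in>H. \<exists>n. x = s + zm n y})"
    "sg {x. \<exists>s\<in>H. \<exists>n. x = s + zm n y}" "H \<subseteq> {x. \<exists>s\<in>H. \<exists>n. x = s + zm n y}"
    "y \<in> {x. \<exists>s\<in>H. \<exists>n. x = s + zm n y}"
    "\<forall>a\<in>{x. \<exists>s\<in>H. \<exists>n. x = s + zm n y}. \<forall>b\<in>{x. \<exists>s\<in>H. \<exists>n. x = s + zm n y}. f0 (a + b) = f0 a * f0 b"
    "\<forall>x\<in>{x. \<exists>s\<in>H. \<exists>n. x = s + zm n y}. norm (f0 x) = 1"
    "\<forall>s\<in>H. f0 s = 1" "f0 y = z0"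
    using ext_step[OF sgH _ _ yH z0(1), of "\<lambda>_. 1"] z0(3) by auto
  have good0: "good f0" unfolding good_def using f0 z0 by auto
  have "\<exists>u\<in>Field r. \<forall>a\<in>C. (a, u) \<in> r" if C: "C \<in> Chains r" for C
  proof (cases "C = {}")
    case True then show ?thesis using good0 Fr by auto
  next
    case False
    then obtain c0 where c0: "c0 \<in> C" by blast
    have chain: "\<forall>a\<in>C. \<forall>b\<in>C. (a, b) \<in> r \<or> (b, a) \<in> r" using C unfolding Chains_def by blast
    have goodC: "good c" if "c \<in> C" for c using chain that unfolding r_def by blast
    have rD: "\<forall>x. a x \<noteq> 0 \<longrightarrow> b x = a x" if "(a, b) \<in> r" for a b
      using that unfolding r_def by auto
    have agree: "a x = b x" if ab: "a \<in> C" "b \<in> C" "a x \<noteq> 0" "b x \<noteq> 0" for a b x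
    proof -
      have "(a, b) \<in> r \<or> (b, a) \<in> r" using chain ab by blast
      then show ?thesis using rD ab by metis
    qed
    have common: "\<exists>c\<in>C. (\<forall>x. a x \<noteq> 0 \<longrightarrow> c x \<noteq> 0) \<and> (\<forall>x. b x \<noteq> 0 \<longrightarrow> c x \<noteq> 0)"
      if ab: "a \<in> C" "b \<in> C" for a b
    proof -
      have "(a, b) \<in> r \<or> (b, a) \<in> r" using chain ab by blast
      then show ?thesis
      proof
        assume "(a, b) \<in> r"
        then have "\<forall>x. a x \<noteq> 0 \<longrightarrow> b x = a x" by (rule rD)
        then show ?thesis using ab(2) by (intro bexI[of _ b]) auto
      next
        assume "(b, a) \<in> r"
        then have "\<forall>x. b x \<noteq> 0 \<longrightarrow> a x = b x" by (rule rD)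
        then show ?thesis using ab(1) by (intro bexI[of _ a]) auto
      qed
    qed
    define u where "u x = (if \<exists>c\<in>C. c x \<noteq> 0 then (SOME c. c \<in> C \<and> c x \<noteq> 0) x else 0)" for x
    have uval: "u x = c x" if "c \<in> C" "c x \<noteq> 0" for c x
    proof -
      have "(SOME c. c \<in> C \<and> c x \<noteq> 0) \<in> C \<and> (SOME c. c \<in> C \<and> c x \<noteq> 0) x \<noteq> 0"
        by (rule someI[of _ c]) (use that in auto)
      then show ?thesis unfolding u_def using that agree by auto
    qed
    have unz: "u x \<noteq> 0 \<longleftrightarrow> (\<exists>c\<in>C. c x \<noteq> 0)" for x
    proof
      assume "u x \<noteq> 0" then show "\<exists>c\<in>C. c x \<noteq> 0" unfolding u_def by (auto split: if_splits)
    next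
      assume "\<exists>c\<in>C. c x \<noteq> 0" then obtain c where "c \<in> C" "c x \<noteq> 0" by blast
      then show "u x \<noteq> 0" using uval[of c x] by simp
    qed
    have gc0: "good c0" using goodC c0 by blast
    have g_sg: "sg {x. c x \<noteq> 0}" if "c \<in> C" for c using goodC[OF that] unfolding good_def by blast
    have g_add: "c (a + b) \<noteq> 0" if "c \<in> C" "c a \<noteq> 0" "c b \<noteq> 0" for c a b
      using g_sg[OF that(1)] that(2,3) unfolding sg_def by blast
    have g_neg: "c (- a) \<noteq> 0" if "c \<in> C" "c a \<noteq> 0" for c a
      using g_sg[OF that(1)] that(2) unfolding sg_def by blast
    have g_hom: "c (a + b) = c a * c b" if "c \<in> C" "c a \<noteq> 0" "c b \<noteq> 0" for c a b
      using goodC[OF that(1)] that(2,3) unfolding good_def by blast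
    have g_norm: "norm (c a) = 1" if "c \<in> C" "c a \<noteq> 0" for c a
      using goodC[OF that(1)] that(2) unfolding good_def by blast
    have g0: "H \<subseteq> {x. c0 x \<noteq> 0}" "c0 y \<noteq> 0" "\<forall>h\<in>H. c0 h = 1" "c0 y \<noteq> 1" "c0 0 \<noteq> 0"
      using gc0 unfolding good_def sg_def by auto
    have gu: "good u" unfolding good_def
    proof (intro conjI)
      show "sg {x. u x \<noteq> 0}" unfolding sg_def
      proof (intro conjI ballI)
        show "0 \<in> {x. u x \<noteq> 0}" using uval[OF c0 g0(5)] g0(5) by simp
      next
        fix a b assume "a \<in> {x. u x \<noteq> 0}" "b \<in> {x. u x \<noteq> 0}"
        then obtain c1 c2 where "c1 \<in> C" "c1 a \<noteq> 0" "c2 \<in> C" "c2 b \<noteq> 0" using unz by auto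
        then obtain c where c: "c \<in> C" "c a \<noteq> 0" "c b \<noteq> 0" using common by blast
        then have "c (a + b) \<noteq> 0" by (rule g_add)
        then show "a + b \<in> {x. u x \<noteq> 0}" using uval[OF c(1)] by simp
      next
        fix a assume "a \<in> {x. u x \<noteq> 0}"
        then obtain c where c: "c \<in> C" "c a \<noteq> 0" using unz by auto
        then have "c (- a) \<noteq> 0" by (rule g_neg)
        then show "- a \<in> {x. u x \<noteq> 0}" using uval[OF c(1)] by simp
      qed
      show "H \<subseteq> {x. u x \<noteq> 0}" using g0(1) uval[OF c0] by auto
      show "y \<in> {x. u x \<noteq> 0}" using g0(2) uval[OF c0] by simp
      show "\<forall>a b. u a \<noteq> 0 \<longrightarrow> u b \<noteq> 0 \<longrightarrow> u (a + b) = u a * u b"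
      proof (intro allI impI)
        fix a b assume "u a \<noteq> 0" "u b \<noteq> 0"
        then obtain c1 c2 where "c1 \<in> C" "c1 a \<noteq> 0" "c2 \<in> C" "c2 b \<noteq> 0" using unz by auto
        then obtain c where c: "c \<in> C" "c a \<noteq> 0" "c b \<noteq> 0" using common by blast
        have "c (a + b) \<noteq> 0" using c by (rule g_add)
        then have "u (a + b) = c (a + b)" "u a = c a" "u b = c b" using uval[OF c(1)] c by auto
        then show "u (a + b) = u a * u b" using g_hom[OF c] by simp
      qed
      show "\<forall>x. u x \<noteq> 0 \<longrightarrow> norm (u x) = 1"
      proof (intro allI impI)
        fix x assume "u x \<noteq> 0"
        then obtain c where c: "c \<in> C" "c x \<noteq> 0" using unz by auto
        then show "norm (u x) = 1" using uval[OF c] g_norm[OF c] by simp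
      qed
      have "h \<in> H \<Longrightarrow> u h = c0 h" for h using uval[OF c0] g0 by blast
      then show "\<forall>h\<in>H. u h = 1" using g0 by simp
      show "u y \<noteq> 1" using uval[OF c0] g0 by simp
    qed
    have "\<forall>a\<in>C. (a, u) \<in> r" unfolding r_def using goodC gu uval by blast
    moreover have "u \<in> Field r" using gu Fr by auto
    ultimately show ?thesis by blast
  qed
  then obtain m where m: "m \<in> Field r" and mmax: "\<forall>a\<in>Field r. (m, a) \<in> r \<longrightarrow> a = m"
    using Zorns_po_lemma[OF po] by blast
  have gm: "good m" using m Fr by auto
  define S where "S = {x. m x \<noteq> 0}"
  have sgS: "sg S" and homS: "\<forall>a\<in>S. \<forall>b\<in>S. m (a + b) = m a * m b" and nrmS: "\<forall>x\<in>S. norm (m x) = 1"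
    using gm unfolding good_def S_def by auto
  have all: "m x \<noteq> 0" for x
  proof (rule ccontr)
    assume "\<not> m x \<noteq> 0"
    then have gS: "x \<notin> S" unfolding S_def by auto
    obtain z :: complex where z: "norm z = 1" "\<forall>n. zm n x \<in> S \<longrightarrow> m (zm n x) = z powi n"
      using z_exists[OF sgS homS nrmS] by blast
    obtain f' S' where f': "\<forall>w. f' w \<noteq> 0 \<longleftrightarrow> w \<in> S'" "sg S'" "S \<subseteq> S'" "x \<in> S'"
      "\<forall>a\<in>S'. \<forall>b\<in>S'. f' (a + b) = f' a * f' b" "\<forall>w\<in>S'. norm (f' w) = 1"
      "\<forall>s\<in>S. f' s = m s" "f' x = z"
      using ext_step[OF sgS homS nrmS gS z(1) z(2)] by blast
    have Hs: "H \<subseteq> S" "y \<in> S" using gm unfolding good_def S_def by auto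
    have gf': "good f'" unfolding good_def
    proof (intro conjI)
      have "{w. f' w \<noteq> 0} = S'" using f'(1) by auto
      then show "sg {w. f' w \<noteq> 0}" "H \<subseteq> {w. f' w \<noteq> 0}" "y \<in> {w. f' w \<noteq> 0}"
        using f'(2,3) Hs by auto
      show "\<forall>a b. f' a \<noteq> 0 \<longrightarrow> f' b \<noteq> 0 \<longrightarrow> f' (a + b) = f' a * f' b" using f'(1,5) by blast
      show "\<forall>w. f' w \<noteq> 0 \<longrightarrow> norm (f' w) = 1" using f'(1,6) by blast
      show "\<forall>h\<in>H. f' h = 1" using f'(7) Hs gm unfolding good_def by auto
      show "f' y \<noteq> 1" using f'(7) Hs gm unfolding good_def by auto
    qed
    have "(m, f') \<in> r" unfolding r_def using gm gf' f'(7) S_def by auto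
    then have "f' = m" using mmax gf' Fr by auto
    then show False using f'(8) z(1) \<open>\<not> m x \<noteq> 0\<close> by auto
  qed
  show ?thesis using gm all unfolding good_def by (rule_tac x=m in exI) auto
qed

lemma gen_top_K:
  assumes "generate_topology_on {{c \<in> characters T. c ` K \<subseteq> V} | K V. compact K \<and> open V} W"
  shows "(\<lambda>_. 1) \<in> W \<longrightarrow> (\<exists>K. compact K \<and> (\<forall>c\<in>characters T. (\<forall>x\<in>K. c x = 1) \<longrightarrow> c \<in> W))"
  using assms
proof (induction rule: generate_topology_on.induct)
  case Empty then show ?case by simp
next
  case (Int a b)
  show ?case
  proof
    assume "(\<lambda>_. 1) \<in> a \<inter> b"
    then obtain Ka Kb where k: "compact Ka" "\<forall>c\<in>characters T. (\<forall>x\<in>Ka. c x = 1) \<longrightarrow> c \<in> a"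
      "compact Kb" "\<forall>c\<in>characters T. (\<forall>x\<in>Kb. c x = 1) \<longrightarrow> c \<in> b" using Int.IH by blast
    have "compact (Ka \<union> Kb)" using k(1,3) by (rule compact_Un)
    moreover have "\<forall>c\<in>characters T. (\<forall>x\<in>Ka \<union> Kb. c x = 1) \<longrightarrow> c \<in> a \<inter> b"
      using k(2,4) by blast
    ultimately show "\<exists>K. compact K \<and> (\<forall>c\<in>characters T. (\<forall>x\<in>K. c x = 1) \<longrightarrow> c \<in> a \<inter> b)"
      by blast
  qed
next
  case (UN K)
  show ?case
  proof
    assume "(\<lambda>_. 1) \<in> \<Union>K"
    then obtain k where kK: "k \<in> K" "(\<lambda>_. 1) \<in> k" by blast
    have "(\<lambda>_. 1) \<in> k \<longrightarrow> (\<exists>Ka. compact Ka \<and> (\<forall>c\<in>characters T. (\<forall>x\<in>Ka. c x = 1) \<longrightarrow> c \<in> k))"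
      using kK(1) by (rule UN.IH)
    then obtain Ka where Ka: "compact Ka" "\<forall>c\<in>characters T. (\<forall>x\<in>Ka. c x = 1) \<longrightarrow> c \<in> k"
      using kK(2) by blast
    have "\<forall>c\<in>characters T. (\<forall>x\<in>Ka. c x = 1) \<longrightarrow> c \<in> \<Union>K"
      using Ka(2) kK(1) by blast
    then show "\<exists>Ka. compact Ka \<and> (\<forall>c\<in>characters T. (\<forall>x\<in>Ka. c x = 1) \<longrightarrow> c \<in> \<Union>K)"
      using Ka(1) by blast
  qed
next
  case (Basis s)
  then obtain K V where s: "s = {c \<in> characters T. c ` K \<subseteq> V}" "compact K" "open V" by blast
  show ?case
  proof
    assume "(\<lambda>_. 1) \<in> s"
    then have V1: "\<forall>x\<in>K. 1 \<in> V" using s(1) by blast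
    have "\<forall>c\<in>characters T. (\<forall>x\<in>K. c x = 1) \<longrightarrow> c \<in> s"
    proof (intro ballI impI)
      fix c assume c: "c \<in> characters T" "\<forall>x\<in>K. c x = 1"
      then have "c ` K \<subseteq> V" using V1 by auto
      then show "c \<in> s" using s(1) c(1) by blast
    qed
    then show "\<exists>Ka. compact Ka \<and> (\<forall>c\<in>characters T. (\<forall>x\<in>Ka. c x = 1) \<longrightarrow> c \<in> s)"
      using s(2) by blast
  qed
qed

theorem mainTheorem16:
  fixes act :: "'r::{ring_1,t2_space} \<Rightarrow> 'm::{ab_group_add,t2_space} \<Rightarrow> 'm"
  assumes "topological_ring TYPE('r)"
    and "locally_compact_space (euclidean :: 'r topology)"
    and "topological_left_module act"
    and "locally_compact_space (euclidean :: 'm topology)"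
    and "dual_NSS act"
  shows "\<exists>K. compact K \<and> gen_submodule act K = UNIV"
proof -
  have lm: "left_module act" and cact: "continuous_on UNIV (\<lambda>p::'r\<times>'m. act (fst p) (snd p))"
    and cadd: "continuous_on UNIV (\<lambda>p::'m\<times>'m. fst p + snd p)"
    using assms(3) unfolding topological_left_module_def by auto
  have "\<exists>U0 K0. open (U0::'m set) \<and> compact K0 \<and> 0 \<in> U0 \<and> U0 \<subseteq> K0"
    using assms(4) unfolding locally_compact_space_def by auto
  then obtain U0 K0 where U0: "open (U0::'m set)" "compact K0" "0 \<in> U0" "U0 \<subseteq> K0"
    by blast
  obtain U W where UW: "U \<subseteq> characters TYPE('m)" "openin (dual_topology TYPE('m)) W"
    "(\<lambda>_. 1) \<in> W" "W \<subseteq> U" "\<forall>N. dual_submodule act N \<and> N \<subseteq> U \<longrightarrow> N = {\<lambda>_. 1}"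
    using assms(5) unfolding dual_NSS_def by blast
  obtain K1 where K1: "compact K1" "\<forall>c\<in>characters TYPE('m). (\<forall>x\<in>K1. c x = 1) \<longrightarrow> c \<in> W"
    using gen_top_K[of "TYPE('m)" W] UW(2,3) unfolding dual_topology_def openin_topology_generated_by_iff
    by blast
  define K where "K = K0 \<union> K1"
  have cK: "compact K" unfolding K_def using U0 K1 by (auto intro: compact_Un)
  define RK where "RK = gen_submodule act K"
  have subm: "is_submodule act RK" unfolding RK_def gen_submodule_def is_submodule_def
    by (intro conjI ballI allI) (simp_all add: Inter_iff)
  have KRK: "K \<subseteq> RK" unfolding RK_def gen_submodule_def by auto
  have "RK = UNIV"
  proof (rule ccontr)
    assume "RK \<noteq> UNIV"
    then obtain y where yRK: "y \<notin> RK" by blast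
    have sgRK: "sg RK" using subm unfolding sg_def is_submodule_def by auto
    obtain \<phi> :: "'m \<Rightarrow> complex" where \<phi>: "\<forall>a b. \<phi> (a + b) = \<phi> a * \<phi> b" "\<forall>x. norm (\<phi> x) = 1"
      "\<forall>h\<in>RK. \<phi> h = 1" "\<phi> y \<noteq> 1"
      using char_sep[OF sgRK yRK] by blast
    have ctrans: "continuous_on UNIV (\<lambda>w::'m. w + c)" for c
      by (rule continuous_on_compose2[OF cadd, of UNIV "\<lambda>w. (w, c)", simplified])
         (auto intro: continuous_intros)
    have "continuous_on UNIV \<phi>"
      unfolding continuous_on_open_vimage[OF open_UNIV]
    proof (intro allI impI)
      fix B :: "complex set" assume "open B"
      show "open (\<phi> -` B \<inter> UNIV)" unfolding open_subopen[of "\<phi> -` B \<inter> UNIV"]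
      proof
        fix x assume x: "x \<in> \<phi> -` B \<inter> UNIV"
        have "open ((\<lambda>w. w + - x) -` U0)" by (rule open_vimage[OF U0(1) ctrans])
        moreover have "x \<in> (\<lambda>w. w + - x) -` U0" using U0 by simp
        moreover have "(\<lambda>w. w + - x) -` U0 \<subseteq> \<phi> -` B \<inter> UNIV"
        proof
          fix w assume "w \<in> (\<lambda>w. w + - x) -` U0"
          then have "w + - x \<in> RK" using U0(4) KRK unfolding K_def by auto
          then have "\<phi> (w + - x) = 1" using \<phi>(3) by blast
          moreover have "\<phi> w = \<phi> (w + - x) * \<phi> x"
          proof -
            have "\<phi> ((w + - x) + x) = \<phi> (w + - x) * \<phi> x" using \<phi>(1) by blast
            then show ?thesis by simp
          qed
          ultimately show "w \<in> \<phi> -` B \<inter> UNIV" using x by simp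
        qed
        ultimately show "\<exists>T. open T \<and> x \<in> T \<and> T \<subseteq> \<phi> -` B \<inter> UNIV" by blast
      qed
    qed
    then have \<phi>c: "\<phi> \<in> characters TYPE('m)" unfolding characters_def using \<phi> by auto
    define N where "N = {c \<in> characters TYPE('m). \<forall>x\<in>RK. c x = 1}"
    have one_c: "(\<lambda>_. 1::complex) \<in> characters TYPE('m)" unfolding characters_def
      by (auto intro: continuous_on_const)
    have "dual_submodule act N" unfolding dual_submodule_def
    proof (intro conjI ballI allI)
      show "N \<subseteq> characters TYPE('m)" unfolding N_def by auto
      show "(\<lambda>_. 1) \<in> N" unfolding N_def using one_c by auto
    next
      fix c d assume "c \<in> N" "d \<in> N"
      then have c: "continuous_on UNIV c" "\<forall>x. norm (c x) = 1" "\<forall>x y. c (x + y) = c x * c y" "\<forall>x\<in>RK. c x = 1"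
        and d: "continuous_on UNIV d" "\<forall>x. norm (d x) = 1" "\<forall>x y. d (x + y) = d x * d y" "\<forall>x\<in>RK. d x = 1"
        unfolding N_def characters_def by auto
      show "(\<lambda>m. c m * d m) \<in> N" unfolding N_def characters_def using c d
        by (auto intro: continuous_on_mult simp: norm_mult mult_ac)
    next
      fix c assume "c \<in> N"
      then have c: "continuous_on UNIV c" "\<forall>x. norm (c x) = 1" "\<forall>x y. c (x + y) = c x * c y" "\<forall>x\<in>RK. c x = 1"
        unfolding N_def characters_def by auto
      have nz: "\<forall>x\<in>UNIV. c x \<noteq> 0" using c(2) by (metis norm_zero zero_neq_one)
      show "(\<lambda>m. inverse (c m)) \<in> N" unfolding N_def characters_def using c
        by (auto intro: continuous_on_inverse[OF c(1) nz] simp: norm_inverse inverse_mult_distrib)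
    next
      fix r and c assume "c \<in> N"
      then have c: "continuous_on UNIV c" "\<forall>x. norm (c x) = 1" "\<forall>x y. c (x + y) = c x * c y" "\<forall>x\<in>RK. c x = 1"
        unfolding N_def characters_def by auto
      have cr: "continuous_on UNIV (\<lambda>m. act r m)"
        by (rule continuous_on_compose2[OF cact, of UNIV "\<lambda>m. (r, m)", simplified])
           (auto intro: continuous_intros)
      have "continuous_on UNIV (\<lambda>m. c (act r m))"
        by (rule continuous_on_compose2[OF c(1) cr]) auto
      moreover have "act r (x + y) = act r x + act r y" for x y using lm unfolding left_module_def by blast
      moreover have "act r x \<in> RK" if "x \<in> RK" for x using subm that unfolding is_submodule_def by blast
      ultimately show "(\<lambda>m. c (act r m)) \<in> N" unfolding N_def characters_def using c by auto
    qed
    moreover have "N \<subseteq> U"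
    proof
      fix c assume "c \<in> N"
      then have "c \<in> characters TYPE('m)" "\<forall>x\<in>K1. c x = 1" using KRK unfolding N_def K_def by auto
      then show "c \<in> U" using K1 UW(4) by blast
    qed
    ultimately have "N = {\<lambda>_. 1}" using UW(5) by blast
    moreover have "\<phi> \<in> N" unfolding N_def using \<phi>c \<phi>(3) by auto
    ultimately have "\<phi> = (\<lambda>_. 1)" by blast
    then show False using \<phi>(4) by simp
  qed
  then show ?thesis using cK unfolding RK_def by blast
qed

end
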